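(* Let $N\ge3$, $p\in(1,\frac N{N-2})$, $\Omega\subset\mathbb{R}^N$ an open bounded domain, $\mu_n\to+\infty$, $\varepsilon_n=\mu_n^{-1/2}$, and let $v_n\ge0$ solve $-\Delta v_n=\mu_n[v_n-1]_+^p$ in $\Omega$ with $$\mu_n^{N/2}\int_\Omega[v_n-1]_+^p\le C_0,\qquad\mu_n^{N/2}\int_\Omega v_n^t\le C_t$$ for some $t\ge1$, $C_0,C_t>0$. Assume that $[v_n-1]_+\to0$ locally uniformly in a subdomain $\Omega'\subseteq\Omega$. Then for every open relatively compact $\Omega_0\Subset\Omega'$ there exist $n_0\in\mathbb{N}$ and $C>0$, depending on $\Omega_0$, such that for all $n>n_0$, $[v_n-1]_+=0$ in $\Omega_0$ and $\|v_n\|_{L^\infty(\Omega_0)}\le C\varepsilon_n^{N/t}$.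
   Context: $[s]_+=\max\{s,0\}$; a subdomain is an open connected subset. *)

theory Defs
  imports "HOL-Analysis.Analysis"
begin

definition pos_part :: "real \<Rightarrow> real" where
  "pos_part s = max s 0"

text \<open>Dv x is the (Frechet) derivative of v at x; D2v x i is the derivative at x of the
  i-th partial derivative y \<mapsto> Dv y i; the Laplacian is the trace
  \<Sum>_{i \<in> Basis} D2v x i i.\<close>
definition solves_neg_laplace ::
  "('a::euclidean_space \<Rightarrow> real) \<Rightarrow> ('a \<Rightarrow> real) \<Rightarrow> 'a set \<Rightarrow> bool" where
  "solves_neg_laplace v g U \<longleftrightarrow>
     (\<exists>Dv D2v.
        (\<forall>x\<in>U. (v has_derivative Dv x) (at x)) \<and>
        (\<forall>x\<in>U. \<forall>i\<in>Basis. ((\<lambda>y. Dv y i) has_derivative D2v x i) (at x)) \<and>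
        (\<forall>i\<in>Basis. \<forall>j\<in>Basis. continuous_on U (\<lambda>x. D2v x i j)) \<and>
        (\<forall>x\<in>U. - (\<Sum>i\<in>Basis. D2v x i i) = g x))"

end

theory Submission
  imports Defs
begin


lemma maxsq_deriv: "((\<lambda>s::real. (max 0 s)^2) has_real_derivative (2 * max 0 s)) (at s)"
proof (cases "s = 0")
  case True
  have "((\<lambda>y. ((max 0 y)^2 - (max 0 0)^2) / (y - 0)) \<longlongrightarrow> 0) (at (0::real))"
  proof (rule Lim_null_comparison)
    show "\<forall>\<^sub>F y in at (0::real). norm (((max 0 y)^2 - (max 0 0)^2) / (y - 0)) \<le> \<bar>y\<bar>"
      by (auto simp: max_def power2_eq_square abs_mult divide_simps)
    show "((\<lambda>y::real. \<bar>y\<bar>) \<longlongrightarrow> 0) (at 0)"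
      using tendsto_rabs[OF tendsto_ident_at[of 0 UNIV]] by simp
  qed
  then show ?thesis using True by (simp add: has_field_derivative_iff)
next
  case False
  show ?thesis
  proof (cases "s > 0")
    case True
    have "((\<lambda>s::real. s^2) has_real_derivative (2 * max 0 s)) (at s)"
      using True by (auto intro!: derivative_eq_intros simp: max_def)
    then show ?thesis
      by (rule has_field_derivative_transform_within_open[where S="{0<..}"]) (use True in \<open>auto simp: max_def\<close>)
  next
    case False2: False
    have "((\<lambda>s::real. 0) has_real_derivative (2 * max 0 s)) (at s)" using False False2 by (simp add: max_def)
    then show ?thesis
      by (rule has_field_derivative_transform_within_open[where S="{..<0}"]) (use False False2 in \<open>auto simp: max_def\<close>)
  qed
qed

definition psi :: "'a::euclidean_space \<Rightarrow> real" where "psi z = max 0 (1 - z \<bullet> z)"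
definition Phi :: "'a::euclidean_space \<Rightarrow> real" where "Phi z = (max 0 (1 - z \<bullet> z))^2 / 4"

lemma Phi_deriv: "(Phi has_derivative (\<lambda>h. - psi z * (z \<bullet> h))) (at z)"
proof -
  have s: "((\<lambda>z. 1 - z \<bullet> z) has_derivative (\<lambda>h. - (2 * (z \<bullet> h)))) (at z)"
    by (auto intro!: derivative_eq_intros simp: inner_commute)
  have m: "((\<lambda>s::real. (max 0 s)^2 / 4) has_derivative (\<lambda>h. h * (max 0 (1 - z \<bullet> z) / 2))) (at (1 - z \<bullet> z))"
    using DERIV_cdivide[OF maxsq_deriv[of "1 - z \<bullet> z"], of 4] unfolding has_field_derivative_def
    by (rule has_derivative_eq_rhs) (auto simp: fun_eq_iff)
  show ?thesis
    using has_derivative_compose[OF s m] unfolding Phi_def psi_def o_def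
    by (auto simp: algebra_simps)
qed



lemma has_integral_translate_UNIV:
  fixes f :: "'a::euclidean_space \<Rightarrow> real"
  assumes "(f has_integral I) (cbox a b)" "\<And>x. x \<notin> cbox a b \<Longrightarrow> f x = 0"
  shows "((\<lambda>x. f (x + c)) has_integral I) UNIV"
proof -
  from has_integral_affinity'[OF assms(1), of 1 c]
  have "((\<lambda>x. f (x + c)) has_integral I) (cbox (a - c) (b - c))" by simp
  then show ?thesis
  proof (rule has_integral_on_superset)
    fix x assume "x \<notin> cbox (a - c) (b - c)"
    then have "x + c \<notin> cbox a b" by (auto simp: mem_box algebra_simps)
    then show "f (x + c) = 0" by (rule assms(2))
  qed auto
qed

lemma ibp:
  fixes G :: "'a::euclidean_space \<Rightarrow> real" and e :: 'a
  assumes V: "open V" and K: "compact K" "K \<subseteq> V"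
    and G0: "\<And>z. z \<notin> K \<Longrightarrow> G z = 0"
    and GD: "\<And>z. z \<in> V \<Longrightarrow> (G has_derivative DG z) (at z)"
    and Dc: "continuous_on V (\<lambda>z. DG z e)"
  shows "((\<lambda>z. if z \<in> V then DG z e else 0) has_integral 0) UNIV"
proof -
  define D where "D z = (if z \<in> V then DG z e else 0)" for z
  have oK: "open (- K)" using K compact_imp_closed by blast
  have DGK: "DG z = (\<lambda>_. 0)" if "z \<in> V" "z \<notin> K" for z
  proof -
    have "(G has_derivative (\<lambda>_. 0)) (at z)"
      by (rule has_derivative_transform_within_open[OF has_derivative_const[of 0] , where s="V - K"])
         (use that V K G0 compact_imp_closed in auto)
    then show ?thesis using GD[OF that(1)] has_derivative_unique by metis
  qed
  have D0: "D z = 0" if "z \<notin> K" for z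
    using DGK[of z] that by (auto simp: D_def)
  have Gderiv: "(G has_derivative (if z \<in> V then DG z else (\<lambda>_. 0))) (at z)" for z
  proof (cases "z \<in> V")
    case True then show ?thesis using GD by simp
  next
    case False
    then have "z \<notin> K" using K by auto
    have "(G has_derivative (\<lambda>_. 0)) (at z)"
      by (rule has_derivative_transform_within_open[OF has_derivative_const[of 0] oK])
         (use \<open>z \<notin> K\<close> G0 in auto)
    then show ?thesis using False by simp
  qed
  have Dcont: "continuous_on UNIV D"
  proof -
    have "continuous_on (V \<union> - K) D"
    proof (rule continuous_on_open_Un[OF V oK])
      show "continuous_on V D" using Dc by (rule continuous_on_eq) (auto simp: D_def)
      show "continuous_on (- K) D" by (rule continuous_on_eq[OF continuous_on_const[of _ 0]]) (auto simp: D0)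
    qed
    moreover have "V \<union> - K = UNIV" using K by auto
    ultimately show ?thesis by simp
  qed
  have Gcont: "continuous_on UNIV G"
    by (meson Gderiv continuous_at_imp_continuous_on has_derivative_continuous)
  obtain c where c: "\<And>x. x \<in> K \<Longrightarrow> norm x \<le> c"
    using compact_imp_bounded[OF K(1)] by (auto simp: bounded_iff)
  define c1 where "c1 = c + norm e + 1"
  define B where "B = cbox (- c1 *\<^sub>R One) (c1 *\<^sub>R (One::'a))"
  have inB: "z \<in> B" if "norm z \<le> c1" for z
    unfolding B_def mem_box
  proof (intro ballI conjI)
    fix i :: 'a assume i: "i \<in> Basis"
    have "\<bar>z \<bullet> i\<bar> \<le> c1" using Basis_le_norm[OF i, of z] that by simp
    then show "(- c1 *\<^sub>R One) \<bullet> i \<le> z \<bullet> i" "z \<bullet> i \<le> (c1 *\<^sub>R One) \<bullet> i"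
      using i by (auto simp: abs_le_iff)
  qed
  have KB: "K \<subseteq> B"
  proof
    fix x assume "x \<in> K" then have "norm x \<le> c1" using c[of x] norm_ge_zero[of e] unfolding c1_def by linarith
    then show "x \<in> B" by (rule inB)
  qed
  obtain M where M: "\<And>z. \<bar>D z\<bar> \<le> M"
  proof -
    have "bounded (D ` K)"
      by (rule compact_imp_bounded, rule compact_continuous_image[OF continuous_on_subset[OF Dcont] K(1)]) auto
    then obtain M0 where "\<And>y. y \<in> D ` K \<Longrightarrow> norm y \<le> M0" by (auto simp: bounded_iff)
    then have "\<bar>D z\<bar> \<le> max M0 0" for z
      by (cases "z \<in> K") (auto simp: D0 intro: le_max_iff_disj[THEN iffD2])
    then show ?thesis using that by blast
  qed
  have Gint: "(G has_integral integral B G) B"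
    unfolding B_def by (rule integrable_integral, rule integrable_continuous, rule continuous_on_subset[OF Gcont]) auto
  have GoB: "G z = 0" if "z \<notin> B" for z using that KB G0 by auto
  have transl: "((\<lambda>z. G (z + h *\<^sub>R e)) has_integral integral B G) UNIV" for h
    unfolding B_def by (rule has_integral_translate_UNIV[OF Gint[unfolded B_def]]) (use GoB in \<open>auto simp: B_def\<close>)
  define hh where "hh k = 1 / real (Suc k)" for k
  have hpos: "hh k > 0" for k by (simp add: hh_def)
  define Q where "Q k z = (G (z + hh k *\<^sub>R e) - G z) / hh k" for k z
  have Qint: "(Q k has_integral 0) UNIV" for k
  proof -
    have "((\<lambda>z. G z) has_integral integral B G) UNIV"
      using transl[of 0] by simp
    from has_integral_divide[OF has_integral_diff[OF transl[of "hh k"] this], of "hh k"]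
    show ?thesis by (simp add: Q_def[abs_def])
  qed
  have gder: "((\<lambda>s. G (z + s *\<^sub>R e)) has_real_derivative D (z + s *\<^sub>R e)) (at s)" for z s
  proof -
    have lin: "linear (if z + s *\<^sub>R e \<in> V then DG (z + s *\<^sub>R e) else (\<lambda>_. 0))"
      using has_derivative_linear[OF Gderiv] by blast
    have "((\<lambda>s. G (z + s *\<^sub>R e)) has_derivative (\<lambda>t. (if z + s *\<^sub>R e \<in> V then DG (z + s *\<^sub>R e) else (\<lambda>_. 0)) (t *\<^sub>R e))) (at s)"
      by (rule has_derivative_compose[of "\<lambda>s. z + s *\<^sub>R e" _ s UNIV G, unfolded o_def, OF _ Gderiv])
         (auto intro!: derivative_eq_intros)
    moreover have "(\<lambda>t. (if z + s *\<^sub>R e \<in> V then DG (z + s *\<^sub>R e) else (\<lambda>_. 0)) (t *\<^sub>R e)) = (\<lambda>t. D (z + s *\<^sub>R e) * t)"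
      using linear_scale[OF lin] by (auto simp: D_def fun_eq_iff mult.commute)
    ultimately show ?thesis by (simp add: has_field_derivative_def)
  qed
  define dom where "dom z = (if z \<in> B then M else 0)" for z
  have domint: "dom integrable_on UNIV"
    unfolding dom_def integrable_restrict_UNIV B_def by (rule integrable_const)
  have Qbound: "norm (Q k z) \<le> dom z" for k z
  proof (cases "z \<in> B")
    case True
    obtain \<xi> where "G (z + hh k *\<^sub>R e) - G (z + 0 *\<^sub>R e) = (hh k - 0) * D (z + \<xi> *\<^sub>R e)"
      using MVT2[OF hpos[of k], of "\<lambda>s. G (z + s *\<^sub>R e)" "\<lambda>s. D (z + s *\<^sub>R e)"] gder by blast
    then have "Q k z = D (z + \<xi> *\<^sub>R e)" using hpos[of k] by (simp add: Q_def)
    then show ?thesis using M True by (simp add: dom_def)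
  next
    case False
    then have nz: "norm z > c1" using inB by force
    have "hh k \<le> 1" by (simp add: hh_def)
    then have "norm (hh k *\<^sub>R e) \<le> norm e" using hpos[of k] by (simp add: mult_left_le_one_le)
    then have "norm (z + hh k *\<^sub>R e) > c" using nz norm_triangle_ineq2[of z "- (hh k *\<^sub>R e)"] unfolding c1_def by simp
    then have "z + hh k *\<^sub>R e \<notin> K" using c[of "z + hh k *\<^sub>R e"] by force
    have "z \<notin> K"
    proof
      assume "z \<in> K" then have "norm z \<le> c" by (rule c)
      with nz norm_ge_zero[of e] show False unfolding c1_def by linarith
    qed
    then show ?thesis using False G0 \<open>z + hh k *\<^sub>R e \<notin> K\<close> by (simp add: Q_def dom_def)
  qed
  have Qconv: "(\<lambda>k. Q k z) \<longlonglongrightarrow> D z" for z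
  proof -
    have "((\<lambda>y. (G (z + y *\<^sub>R e) - G (z + 0 *\<^sub>R e)) / (y - 0)) \<longlongrightarrow> D (z + 0 *\<^sub>R e)) (at 0)"
      using gder[of z 0] by (simp add: has_field_derivative_iff)
    then have lim: "((\<lambda>y. (G (z + y *\<^sub>R e) - G z) / y) \<longlongrightarrow> D z) (at 0)" by simp
    have "filterlim hh (at 0) sequentially"
      unfolding hh_def
    proof (rule filterlim_atI)
      show "(\<lambda>k. 1 / real (Suc k)) \<longlonglongrightarrow> 0" by (rule LIMSEQ_Suc[OF lim_1_over_n])
      show "\<forall>\<^sub>F k in sequentially. 1 / real (Suc k) \<noteq> 0" by simp
    qed
    from filterlim_compose[OF lim this] show ?thesis by (simp add: Q_def o_def)
  qed
  have Qi: "Q k integrable_on UNIV" for k using Qint by blast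
  from dominated_convergence[OF Qi domint Qbound Qconv]
  have Dint: "D integrable_on UNIV" and lim: "(\<lambda>k. integral UNIV (Q k)) \<longlonglongrightarrow> integral UNIV D" by auto
  have "(\<lambda>k. integral UNIV (Q k)) = (\<lambda>k. 0)" using Qint by (simp add: fun_eq_iff integral_unique)
  with lim have "(\<lambda>k. 0::real) \<longlonglongrightarrow> integral UNIV D" by simp
  from LIMSEQ_unique[OF this tendsto_const] have "integral UNIV D = 0" by simp
  with Dint show ?thesis unfolding D_def[abs_def] by (metis has_integral_integrable_integral)
qed



lemma lin_expand:
  fixes f :: "'a::euclidean_space \<Rightarrow> real"
  assumes "linear f"
  shows "f x = (\<Sum>i\<in>Basis. (x \<bullet> i) * f i)"
proof -
  have "f x = f (\<Sum>i\<in>Basis. (x \<bullet> i) *\<^sub>R i)" by (simp add: euclidean_representation)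
  also have "\<dots> = (\<Sum>i\<in>Basis. f ((x \<bullet> i) *\<^sub>R i))" by (simp add: linear_sum[OF assms])
  also have "\<dots> = (\<Sum>i\<in>Basis. (x \<bullet> i) * f i)" by (simp add: linear_scale[OF assms])
  finally show ?thesis .
qed

lemma integrable_compact_cont:
  fixes f :: "'a::euclidean_space \<Rightarrow> real"
  assumes "compact S" "continuous_on S f"
  shows "f integrable_on S"
proof -
  have "integrable lborel (\<lambda>x. indicator S x *\<^sub>R f x)"
    by (rule borel_integrable_compact[OF assms])
  then have "(\<lambda>x. indicator S x *\<^sub>R f x) integrable_on UNIV" by (rule integrable_on_lborel)
  moreover have "(\<lambda>x. indicator S x *\<^sub>R f x) = (\<lambda>x. if x \<in> S then f x else 0)"
    by (auto simp: indicator_def fun_eq_iff)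
  ultimately show ?thesis using integrable_restrict_UNIV by metis
qed

lemma psi_nonneg: "psi z \<ge> 0" by (simp add: psi_def)
lemma psi_le1: "psi z \<le> 1" by (simp add: psi_def)
lemma Phi_nonneg: "Phi z \<ge> 0" by (simp add: Phi_def)

lemma outside_ball:
  fixes z :: "'a::euclidean_space"
  assumes "z \<notin> cball 0 1"
  shows "psi z = 0" "Phi z = 0"
proof -
  have "norm z > 1" using assms by (simp add: mem_cball_0 not_le)
  then have "norm z * norm z > 1 * 1" by (intro mult_strict_mono) auto
  then have "z \<bullet> z > 1" by (simp add: dot_square_norm power2_eq_square)
  then show "psi z = 0" "Phi z = 0" by (auto simp: psi_def Phi_def)
qed

lemma psi_cont: "continuous_on S psi"
  unfolding psi_def[abs_def] by (intro continuous_intros)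
lemma Phi_cont: "continuous_on S Phi"
  unfolding Phi_def[abs_def] by (intro continuous_intros) auto

lemma cball_sub_cbox: "cball (0::'a::euclidean_space) 1 \<subseteq> cbox (-One) One"
proof
  fix z :: 'a assume "z \<in> cball 0 1"
  then have nz: "norm z \<le> 1" by (simp add: mem_cball_0)
  show "z \<in> cbox (-One) One"
    unfolding mem_box
  proof (intro ballI conjI)
    fix i :: 'a assume i: "i \<in> Basis"
    have "\<bar>z \<bullet> i\<bar> \<le> 1" using Basis_le_norm[OF i, of z] nz by simp
    then show "(- One) \<bullet> i \<le> z \<bullet> i" "z \<bullet> i \<le> One \<bullet> i"
      using i by (auto simp: abs_le_iff)
  qed
qed



lemma submean:
  fixes w :: "'a::euclidean_space \<Rightarrow> real" and x0 :: 'a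
  assumes R: "0 < R" "R < R2"
    and Dw: "\<And>x. x \<in> ball x0 R2 \<Longrightarrow> (w has_derivative Dw x) (at x)"
    and D2w: "\<And>x i. x \<in> ball x0 R2 \<Longrightarrow> i \<in> Basis \<Longrightarrow> ((\<lambda>y. Dw y i) has_derivative D2w x i) (at x)"
    and D2c: "\<And>i. i \<in> Basis \<Longrightarrow> continuous_on (ball x0 R2) (\<lambda>x. D2w x i i)"
    and lap: "\<And>x. x \<in> ball x0 R2 \<Longrightarrow> (\<Sum>i\<in>Basis. D2w x i i) \<ge> - a"
    and a: "a \<ge> 0"
  shows "w x0 * integral (cbox (-One) (One::'a)) psi \<le>
         integral (cbox (-One) One) (\<lambda>z. w (x0 + R *\<^sub>R closest_point (cball 0 1) z) * psi z)
         + a * integral (cball (0::'a) 1) Phi * R^2 / 2"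
proof -
  define K :: "'a set" where "K = cball 0 1"
  define B :: "'a set" where "B = cbox (-One) One"
  define P where "P = closest_point K"
  have Kprops: "convex K" "closed K" "K \<noteq> {}" "compact K" unfolding K_def by auto
  have PK: "P z \<in> K" for z unfolding P_def using closest_point_in_set[OF Kprops(2,3)] .
  have Pn: "norm (P z) \<le> 1" for z using PK[of z] by (simp add: K_def mem_cball_0)
  have Pid: "z \<in> K \<Longrightarrow> P z = z" for z unfolding P_def by (rule closest_point_self)
  have Pc: "continuous_on S P" for S unfolding P_def by (rule continuous_on_closest_point[OF Kprops(1-3)])
  have KB: "K \<subseteq> B" unfolding K_def B_def by (rule cball_sub_cbox)
  have wc: "continuous_on (ball x0 R2) w"
    by (meson Dw continuous_at_imp_continuous_on has_derivative_continuous)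
  have Dwic: "continuous_on (ball x0 R2) (\<lambda>y. Dw y i)" if "i \<in> Basis" for i
    by (intro continuous_at_imp_continuous_on ballI has_derivative_continuous[OF D2w] that)
  have linDw: "linear (Dw x)" if "x \<in> ball x0 R2" for x
    using has_derivative_linear[OF Dw[OF that]] .
  have linD2: "linear (D2w x i)" if "x \<in> ball x0 R2" "i \<in> Basis" for x i
    using has_derivative_linear[OF D2w[OF that]] .
  have inball: "x0 + r *\<^sub>R P z \<in> ball x0 R2" if "r \<in> {0..R}" for r z
  proof -
    have "norm (r *\<^sub>R P z) \<le> R * 1"
      using that Pn[of z] mult_mono[of r R "norm (P z)" 1] by auto
    then show ?thesis using R by (simp add: dist_norm)
  qed
  define f where "f r z = w (x0 + r *\<^sub>R P z) * psi z" for r z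
  define fr where "fr r z = (\<Sum>i\<in>Basis. (P z \<bullet> i) * Dw (x0 + r *\<^sub>R P z) i) * psi z" for r z
  have fder: "((\<lambda>r. f r z) has_field_derivative fr r z) (at r within {0..R})" if r: "r \<in> {0..R}" for r z
  proof -
    have y: "x0 + r *\<^sub>R P z \<in> ball x0 R2" using inball[OF r] .
    have "((\<lambda>r. w (x0 + r *\<^sub>R P z)) has_derivative (\<lambda>t. Dw (x0 + r *\<^sub>R P z) (t *\<^sub>R P z))) (at r)"
      by (rule has_derivative_compose[of "\<lambda>r. x0 + r *\<^sub>R P z" _ r UNIV w, unfolded o_def, OF _ Dw[OF y]])
         (auto intro!: derivative_eq_intros)
    moreover have "(\<lambda>t. Dw (x0 + r *\<^sub>R P z) (t *\<^sub>R P z)) = (\<lambda>t. Dw (x0 + r *\<^sub>R P z) (P z) * t)"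
      using linear_scale[OF linDw[OF y]] by (auto simp: fun_eq_iff mult.commute)
    ultimately have "((\<lambda>r. w (x0 + r *\<^sub>R P z)) has_field_derivative Dw (x0 + r *\<^sub>R P z) (P z)) (at r)"
      by (simp add: has_field_derivative_def)
    from DERIV_cmult_right[OF this, of "psi z"]
    have "((\<lambda>r. f r z) has_field_derivative fr r z) (at r)"
      unfolding f_def fr_def using lin_expand[OF linDw[OF y], of "P z"] by simp
    then show ?thesis by (rule has_field_derivative_at_within)
  qed
  have fint: "f r integrable_on B" if r: "r \<in> {0..R}" for r
  proof -
    have "continuous_on B (f r)"
      unfolding f_def[abs_def]
      by (intro continuous_intros psi_cont continuous_on_compose2[OF wc] Pc) (use inball[OF r] in auto)
    then show ?thesis unfolding B_def by (rule integrable_continuous)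
  qed
  have frc: "continuous_on ({0..R} \<times> B) (\<lambda>(r, z). fr r z)"
  proof -
    have "continuous_on ({0..R} \<times> B) (\<lambda>x. fr (fst x) (snd x))"
      unfolding fr_def
      by (intro continuous_intros psi_cont continuous_on_compose2[OF psi_cont] continuous_on_compose2[OF Pc]
           continuous_on_compose2[OF Dwic]) (auto intro: inball)
    then show ?thesis by (simp add: case_prod_beta')
  qed
  define F where "F r = integral B (f r)" for r
  have Fder: "(F has_field_derivative integral B (fr r)) (at r within {0..R})" if r: "r \<in> {0..R}" for r
    unfolding F_def B_def
    by (rule leibniz_rule_field_derivative[OF fder fint[unfolded B_def] frc[unfolded B_def] r])
       (auto simp: B_def)
  define M where "M = integral K Phi"
  have key: "integral B (fr r) \<ge> - a * M * r" if r: "0 < r" "r < R" for r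
  proof -
    define Lap where "Lap x = (\<Sum>i\<in>Basis. D2w x i i)" for x
    define Bf where "Bf z = (\<Sum>i\<in>Basis. (z \<bullet> i) * Dw (x0 + r *\<^sub>R z) i) * psi z" for z
    define A where "A z = r * Lap (x0 + r *\<^sub>R z) * Phi z" for z
    have rK: "x0 + r *\<^sub>R z \<in> ball x0 R2" if "z \<in> K" for z
      using inball[of r z] r Pid[OF that] by simp
    have frK: "fr r z = (if z \<in> K then Bf z else 0)" for z
      using Pid[of z] outside_ball[of z] by (auto simp: fr_def Bf_def K_def)
    have "integral B (fr r) = integral B (\<lambda>z. if z \<in> K then Bf z else 0)"
      by (rule integral_cong) (rule frK)
    also have "\<dots> = integral K Bf"
    proof -
      have "integral K Bf = integral B (\<lambda>z. if z \<in> K then Bf z else 0)"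
        by (rule integral_unique[symmetric], subst has_integral_restrict[OF KB], rule integrable_integral,
            rule integrable_compact_cont[OF Kprops(4)])
           (unfold Bf_def, intro continuous_intros psi_cont continuous_on_compose2[OF Dwic], auto intro: rK)
      then show ?thesis by simp
    qed
    finally have eq1: "integral B (fr r) = integral K Bf" .
    define V where "V = ball (0::'a) (R2 / r)"
    have oV: "open V" unfolding V_def by simp
    have KV: "K \<subseteq> V" unfolding K_def V_def
    proof (rule subsetI)
      fix z :: 'a assume "z \<in> cball 0 1" then have "norm z \<le> 1" by (simp add: mem_cball_0)
      then have "r * norm z \<le> r * 1" using r by (intro mult_left_mono) auto
      then have "r * norm z < R2" using r R by linarith
      then have "norm z * r < R2" by (simp add: mult.commute)
      then show "z \<in> ball 0 (R2 / r)" using r by (simp add: mem_ball_0 pos_less_divide_eq)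
    qed
    have zV: "x0 + r *\<^sub>R z \<in> ball x0 R2" if "z \<in> V" for z
      using that r by (auto simp: V_def dist_norm field_simps)
    define g where "g i z = r * D2w (x0 + r *\<^sub>R z) i i * Phi z - Dw (x0 + r *\<^sub>R z) i * psi z * (z \<bullet> i)" for i z
    have gint: "(g i has_integral 0) K" if i: "i \<in> Basis" for i
    proof -
      define G where "G z = Dw (x0 + r *\<^sub>R z) i * Phi z" for z
      define DG where "DG z = (\<lambda>h. D2w (x0 + r *\<^sub>R z) i (r *\<^sub>R h) * Phi z + Dw (x0 + r *\<^sub>R z) i * (- psi z * (z \<bullet> h)))" for z
      have GD: "(G has_derivative DG z) (at z)" if "z \<in> V" for z
      proof -
        have "((\<lambda>z. Dw (x0 + r *\<^sub>R z) i) has_derivative (\<lambda>h. D2w (x0 + r *\<^sub>R z) i (r *\<^sub>R h))) (at z)"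
          by (rule has_derivative_compose[of "\<lambda>z. x0 + r *\<^sub>R z" _ z UNIV "\<lambda>y. Dw y i", unfolded o_def, OF _ D2w[OF zV[OF that] i]])
             (auto intro!: derivative_eq_intros)
        from has_derivative_mult[OF this Phi_deriv[of z]] show ?thesis
          unfolding G_def DG_def by (rule has_derivative_eq_rhs) (auto simp: fun_eq_iff algebra_simps)
      qed
      have G0: "G z = 0" if "z \<notin> K" for z using outside_ball[of z] that by (simp add: G_def K_def)
      have DGe: "DG z i = g i z" if "z \<in> V" for z
        using linear_scale[OF linD2[OF zV[OF that] i], of r i] by (simp add: DG_def g_def)
      have gc: "continuous_on V (g i)"
        unfolding g_def[abs_def]
        by (intro continuous_intros psi_cont Phi_cont continuous_on_compose2[OF Dwic[OF i]]
             continuous_on_compose2[OF D2c[OF i]]) (auto intro: zV)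
      have "((\<lambda>z. if z \<in> V then DG z i else 0) has_integral 0) UNIV"
        by (rule ibp[OF oV Kprops(4) KV G0 GD]) (use gc DGe in \<open>auto intro: continuous_on_eq\<close>)
      moreover have "(\<lambda>z. if z \<in> V then DG z i else 0) = (\<lambda>z. if z \<in> K then g i z else 0)"
      proof
        fix z show "(if z \<in> V then DG z i else 0) = (if z \<in> K then g i z else 0)"
          using DGe[of z] KV outside_ball[of z] by (auto simp: g_def K_def)
      qed
      ultimately show ?thesis by simp
    qed
    have sumint: "((\<lambda>z. \<Sum>i\<in>Basis. g i z) has_integral 0) K"
      using has_integral_sum[of Basis g "\<lambda>_. 0" K, OF finite_Basis gint] by simp
    have sumeq: "(\<Sum>i\<in>Basis. g i z) = A z - Bf z" for z
      by (simp add: g_def A_def Bf_def Lap_def sum_subtractf sum_distrib_left sum_distrib_right algebra_simps)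
    have Aint: "A integrable_on K"
      unfolding A_def[abs_def] Lap_def
      by (rule integrable_compact_cont[OF Kprops(4)],
          intro continuous_intros Phi_cont continuous_on_compose2[OF D2c]) (auto intro: rK)
    have Bint: "Bf integrable_on K"
      unfolding Bf_def[abs_def]
      by (rule integrable_compact_cont[OF Kprops(4)],
          intro continuous_intros psi_cont continuous_on_compose2[OF Dwic]) (auto intro: rK)
    have "integral K (\<lambda>z. A z - Bf z) = integral K A - integral K Bf" by (rule integral_diff[OF Aint Bint])
    moreover have "integral K (\<lambda>z. A z - Bf z) = 0" using sumint unfolding sumeq by (rule integral_unique)
    ultimately have eq2: "integral K Bf = integral K A" by simp
    have "integral K (\<lambda>z. (- a * r) * Phi z) \<le> integral K A"
    proof (rule integral_le)
      show "(\<lambda>z. (- a * r) * Phi z) integrable_on K"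
        by (rule integrable_compact_cont[OF Kprops(4)], intro continuous_intros Phi_cont)
      show "A integrable_on K" by (rule Aint)
      fix z assume "z \<in> K"
      have "- a \<le> Lap (x0 + r *\<^sub>R z)" unfolding Lap_def by (rule lap[OF rK[OF \<open>z \<in> K\<close>]])
      then have "r * (- a) \<le> r * Lap (x0 + r *\<^sub>R z)" using r by (intro mult_left_mono) auto
      then have "- a * r \<le> r * Lap (x0 + r *\<^sub>R z)" by (metis mult.commute)
      then show "(- a * r) * Phi z \<le> A z" unfolding A_def by (rule mult_right_mono[OF _ Phi_nonneg])
    qed
    then have "- a * r * M \<le> integral K A" by (simp add: M_def)
    then show ?thesis using eq1 eq2 by (simp add: algebra_simps)
  qed
  define H where "H r = F r + a * M * r^2 / 2" for r
  have Hder: "(H has_field_derivative integral B (fr r) + a * M * r) (at r within {0..R})" if "r \<in> {0..R}" for r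
  proof -
    have "((\<lambda>r. a * M * r^2 / 2) has_field_derivative a * M * r) (at r within {0..R})"
      by (auto intro!: derivative_eq_intros)
    from DERIV_add[OF Fder[OF that] this] show ?thesis by (simp add: H_def[abs_def])
  qed
  have Hnn: "\<exists>y. (H has_field_derivative y) (at r) \<and> 0 \<le> y" if r: "0 < r" "r < R" for r
  proof -
    have "(H has_field_derivative integral B (fr r) + a * M * r) (at r)"
      using Hder[of r] r at_within_Icc_at[of 0 r R] by simp
    moreover have "integral B (fr r) + a * M * r \<ge> 0" using key[OF r] by simp
    ultimately show ?thesis by blast
  qed
  have Hcont: "continuous_on {0..R} H"
    using Hder DERIV_continuous continuous_on_eq_continuous_within by blast
  have "H 0 \<le> H R"
    by (rule DERIV_nonneg_imp_increasing_open[of 0 R H]) (use R Hnn Hcont in auto)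
  moreover have "F 0 = w x0 * integral B psi"
  proof -
    have "f 0 = (\<lambda>z. w x0 * psi z)" by (simp add: f_def fun_eq_iff)
    then show ?thesis by (simp add: F_def)
  qed
  ultimately show ?thesis
    by (simp add: H_def F_def f_def[abs_def] B_def M_def K_def P_def)
qed



lemma young_pow:
  fixes v l t :: real
  assumes "v \<ge> 0" "l > 0" "t \<ge> 1"
  shows "v \<le> l + l powr (1 - t) * v powr t"
proof (cases "v \<le> l")
  case True
  have "l powr (1 - t) * v powr t \<ge> 0" by simp
  then show ?thesis using True by linarith
next
  case False
  then have vpos: "v > 0" using assms by simp
  have "v powr t = v powr (1 + (t - 1))" by simp
  also have "\<dots> = v powr 1 * v powr (t - 1)" by (rule powr_add)
  also have "\<dots> = v * v powr (t - 1)" using vpos by simp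
  finally have "v powr t = v * v powr (t - 1)" .
  also have "\<dots> \<ge> v * l powr (t - 1)"
    using False assms by (intro mult_left_mono powr_mono2) auto
  finally have "l powr (1 - t) * v powr t \<ge> l powr (1 - t) * (v * l powr (t - 1))"
    by (simp add: mult_left_mono)
  also have "l powr (1 - t) * (v * l powr (t - 1)) = v * (l powr (1 - t) * l powr (t - 1))" by simp
  also have "l powr (1 - t) * l powr (t - 1) = 1" using assms by (simp add: powr_add[symmetric])
  finally show ?thesis using assms by simp
qed

lemma Psi_pos: "integral (cbox (-One) (One::'a::euclidean_space)) psi > 0"
proof -
  define n where "n = real DIM('a)"
  have n1: "n \<ge> 1" unfolding n_def using DIM_positive by (simp add: Suc_le_eq)
  define \<delta> where "\<delta> = 1 / (2 * n)"
  have \<delta>: "\<delta> > 0" "\<delta> \<le> 1" using n1 by (auto simp: \<delta>_def field_simps)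
  define Bs where "Bs = cbox (- \<delta> *\<^sub>R One) (\<delta> *\<^sub>R (One::'a))"
  have BsB: "Bs \<subseteq> cbox (-One) One"
  proof
    fix x assume x: "x \<in> Bs"
    show "x \<in> cbox (-One) One"
      unfolding mem_box
    proof (intro ballI conjI)
      fix i :: 'a assume i: "i \<in> Basis"
      then have "- \<delta> \<le> x \<bullet> i \<and> x \<bullet> i \<le> \<delta>" using x by (auto simp: Bs_def mem_box)
      then show "(- One) \<bullet> i \<le> x \<bullet> i" "x \<bullet> i \<le> One \<bullet> i" using i \<delta> by auto
    qed
  qed
  have half: "psi z \<ge> 1/2" if "z \<in> Bs" for z
  proof -
    have "norm z \<le> (\<Sum>b\<in>Basis. \<bar>z \<bullet> b\<bar>)" by (rule norm_le_l1)
    also have "\<dots> \<le> (\<Sum>b\<in>(Basis::'a set). \<delta>)"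
      using that unfolding Bs_def mem_box by (intro sum_mono) (auto simp: abs_le_iff)
    also have "\<dots> = 1/2" using n1 by (simp add: \<delta>_def n_def)
    finally have nz: "norm z \<le> 1/2" .
    then have "norm z * norm z \<le> (1/2) * (1/2)" by (intro mult_mono) auto
    then have "z \<bullet> z \<le> 1/4" by (simp add: dot_square_norm power2_eq_square)
    then show ?thesis by (simp add: psi_def)
  qed
  have "integral Bs (\<lambda>_. 1/2) \<le> integral Bs psi"
  proof (rule integral_le)
    show "(\<lambda>_. 1/2::real) integrable_on Bs" unfolding Bs_def by (rule integrable_const)
    show "psi integrable_on Bs" unfolding Bs_def by (rule integrable_continuous, rule psi_cont)
    fix x assume "x \<in> Bs" then show "1/2 \<le> psi x" by (rule half)
  qed
  moreover have "integral Bs (\<lambda>_. 1/2::real) > 0"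
  proof -
    have "Henstock_Kurzweil_Integration.content Bs > 0" unfolding Bs_def by (rule content_pos_lt) (use \<delta> in auto)
    then show ?thesis unfolding Bs_def by simp
  qed
  moreover have "integral Bs psi \<le> integral (cbox (-One) (One::'a)) psi"
    by (rule integral_subset_le[OF BsB]) (auto simp: Bs_def intro!: integrable_continuous psi_cont psi_nonneg)
  ultimately show ?thesis by linarith
qed

lemma scaled_bound:
  fixes g :: "'a::euclidean_space \<Rightarrow> real"
  assumes R: "R > 0" and gc: "continuous_on (cball x0 R) g"
    and gnn: "\<And>y. y \<in> cball x0 R \<Longrightarrow> g y \<ge> 0"
    and sub: "cball x0 R \<subseteq> \<Omega>"
  shows "ennreal (integral (cball 0 1) (\<lambda>z. g (x0 + R *\<^sub>R z)) * R ^ DIM('a))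
          \<le> (\<integral>\<^sup>+x\<in>\<Omega>. ennreal (g x) \<partial>lebesgue)"
proof -
  define I where "I = integral (cball x0 R) g"
  have gI: "(g has_integral I) (cball x0 R)"
    unfolding I_def by (rule integrable_integral, rule integrable_compact_cont[OF compact_cball gc])
  have "ennreal I = (\<integral>\<^sup>+x. ennreal (g x) * indicator (cball x0 R) x \<partial>lborel)"
    by (rule nn_integral_has_integral_lebesgue'[OF gnn gI, symmetric])
  also have "\<dots> \<le> (\<integral>\<^sup>+x. ennreal (g x) * indicator \<Omega> x \<partial>lborel)"
    by (intro nn_integral_mono) (use sub in \<open>auto simp: indicator_def\<close>)
  also have "\<dots> = (\<integral>\<^sup>+x\<in>\<Omega>. ennreal (g x) \<partial>lebesgue)"
    by (simp add: nn_integral_completion)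
  finally have bound: "ennreal I \<le> (\<integral>\<^sup>+x\<in>\<Omega>. ennreal (g x) \<partial>lebesgue)" .
  define g0 where "g0 y = (if y \<in> cball x0 R then g y else 0)" for y
  define a where "a = x0 - R *\<^sub>R (One::'a)"
  define b where "b = x0 + R *\<^sub>R (One::'a)"
  have cbsub: "cball x0 R \<subseteq> cbox a b"
  proof
    fix y assume "y \<in> cball x0 R"
    then have ny: "norm (y - x0) \<le> R" by (simp add: dist_norm norm_minus_commute)
    show "y \<in> cbox a b"
      unfolding mem_box a_def b_def
    proof (intro ballI conjI)
      fix i :: 'a assume i: "i \<in> Basis"
      have "\<bar>(y - x0) \<bullet> i\<bar> \<le> R" using Basis_le_norm[OF i, of "y - x0"] ny by simp
      then show "(x0 - R *\<^sub>R One) \<bullet> i \<le> y \<bullet> i" "y \<bullet> i \<le> (x0 + R *\<^sub>R One) \<bullet> i"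
        using i by (auto simp: abs_le_iff inner_diff_left inner_add_left)
    qed
  qed
  have "(g0 has_integral I) (cbox a b)"
    unfolding g0_def[abs_def] by (subst has_integral_restrict[OF cbsub]) (rule gI)
  from has_integral_affinity'[OF this R, of x0]
  have A: "((\<lambda>z. g0 (R *\<^sub>R z + x0)) has_integral I / R ^ DIM('a)) (cbox (-One) One)"
    using R by (simp add: a_def b_def divide_inverse_commute scaleR_right_diff_distrib) 
  have eq: "(\<lambda>z. g0 (R *\<^sub>R z + x0)) = (\<lambda>z. if z \<in> cball 0 1 then g (x0 + R *\<^sub>R z) else 0)"
  proof
    fix z :: 'a
    have "R *\<^sub>R z + x0 \<in> cball x0 R \<longleftrightarrow> z \<in> cball 0 1"
      using R by (simp add: dist_norm mem_cball_0)
    then show "g0 (R *\<^sub>R z + x0) = (if z \<in> cball 0 1 then g (x0 + R *\<^sub>R z) else 0)"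
      by (simp add: g0_def add.commute)
  qed
  from A have "((\<lambda>z. if z \<in> cball 0 1 then g (x0 + R *\<^sub>R z) else 0) has_integral I / R ^ DIM('a)) (cbox (-One) One)"
    unfolding eq .
  then have "((\<lambda>z. g (x0 + R *\<^sub>R z)) has_integral I / R ^ DIM('a)) (cball 0 1)"
    by (subst (asm) has_integral_restrict[OF cball_sub_cbox])
  then have "integral (cball 0 1) (\<lambda>z. g (x0 + R *\<^sub>R z)) * R ^ DIM('a) = I"
    using R by (simp add: integral_unique)
  then show ?thesis using bound by simp
qed



lemma combined:
  fixes w :: "'a::euclidean_space \<Rightarrow> real" and g :: "'a \<Rightarrow> real"
  assumes sol: "solves_neg_laplace w g \<Omega>"
    and R: "0 < R" "R < R2" and sub: "ball x0 R2 \<subseteq> \<Omega>"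
    and ga: "\<And>x. x \<in> ball x0 R2 \<Longrightarrow> g x \<le> a" and a: "a \<ge> 0"
    and wnn: "\<And>x. x \<in> \<Omega> \<Longrightarrow> w x \<ge> 0"
    and l: "l > 0" and t: "t \<ge> 1"
    and Y: "(\<integral>\<^sup>+x\<in>\<Omega>. ennreal (w x powr t) \<partial>lebesgue) \<le> ennreal Y" "Y \<ge> 0"
  shows "w x0 * integral (cbox (-One) (One::'a)) psi
          \<le> l * Henstock_Kurzweil_Integration.content (cbox (-One) (One::'a)) + l powr (1 - t) * Y / R ^ DIM('a)
             + a * integral (cball (0::'a) 1) Phi * R^2 / 2"
proof -
  from sol obtain Dw D2w where
    Dw: "\<And>x. x \<in> \<Omega> \<Longrightarrow> (w has_derivative Dw x) (at x)" and
    D2w: "\<And>x i. x \<in> \<Omega> \<Longrightarrow> i \<in> Basis \<Longrightarrow> ((\<lambda>y. Dw y i) has_derivative D2w x i) (at x)" and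
    D2c: "\<And>i j. i \<in> Basis \<Longrightarrow> j \<in> Basis \<Longrightarrow> continuous_on \<Omega> (\<lambda>x. D2w x i j)" and
    eq: "\<And>x. x \<in> \<Omega> \<Longrightarrow> - (\<Sum>i\<in>Basis. D2w x i i) = g x"
    unfolding solves_neg_laplace_def by blast
  define Bx :: "'a set" where "Bx = cbox (-One) One"
  define Kb :: "'a set" where "Kb = cball 0 1"
  define P where "P = closest_point Kb"
  have sm: "w x0 * integral Bx psi \<le> integral Bx (\<lambda>z. w (x0 + R *\<^sub>R P z) * psi z)
         + a * integral Kb Phi * R^2 / 2"
    unfolding Bx_def Kb_def P_def
  proof (rule submean[OF R, of x0 w Dw D2w a])
    show "(w has_derivative Dw x) (at x)" if "x \<in> ball x0 R2" for x using Dw sub that by blast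
    show "((\<lambda>y. Dw y i) has_derivative D2w x i) (at x)" if "x \<in> ball x0 R2" "i \<in> Basis" for x i
      using D2w sub that by blast
    show "continuous_on (ball x0 R2) (\<lambda>x. D2w x i i)" if "i \<in> Basis" for i
      using D2c[OF that that] sub by (rule continuous_on_subset)
    show "- a \<le> (\<Sum>i\<in>Basis. D2w x i i)" if "x \<in> ball x0 R2" for x
      using eq[of x] ga[OF that] sub that by auto
  qed (use a in auto)
  have Kprops: "convex Kb" "closed Kb" "Kb \<noteq> {}" "compact Kb" unfolding Kb_def by auto
  have PK: "P z \<in> Kb" for z unfolding P_def using closest_point_in_set[OF Kprops(2,3)] .
  have Pid: "z \<in> Kb \<Longrightarrow> P z = z" for z unfolding P_def by (rule closest_point_self)
  have Pc: "continuous_on S P" for S unfolding P_def by (rule continuous_on_closest_point[OF Kprops(1-3)])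
  have wc: "continuous_on \<Omega> w"
    by (meson Dw continuous_at_imp_continuous_on has_derivative_continuous)
  have inball: "x0 + R *\<^sub>R z \<in> cball x0 R" if "z \<in> Kb" for z
    using that R by (simp add: Kb_def dist_norm mem_cball_0)
  have "cball x0 R \<subseteq> ball x0 R2" using R by (auto simp: subset_eq)
  then have cbsub: "cball x0 R \<subseteq> \<Omega>" using sub by blast
  have inO: "x0 + R *\<^sub>R P z \<in> \<Omega>" for z using inball[OF PK[of z]] cbsub by blast
  have inO2: "x0 + R *\<^sub>R z \<in> \<Omega>" if "z \<in> Kb" for z using inball[OF that] cbsub by blast
  have w0K: "w (x0 + R *\<^sub>R z) \<ge> 0" if "z \<in> Kb" for z using wnn[OF inO2[OF that]] .
  define q where "q z = w (x0 + R *\<^sub>R z) powr t" for z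
  define h where "h z = (if z \<in> Kb then q z else 0)" for z
  have pt: "w (x0 + R *\<^sub>R P z) * psi z \<le> l + l powr (1 - t) * h z" for z
  proof (cases "z \<in> Kb")
    case True
    have w0: "w (x0 + R *\<^sub>R z) \<ge> 0" using wnn inball[OF True] cbsub by blast
    have "w (x0 + R *\<^sub>R z) * psi z \<le> w (x0 + R *\<^sub>R z)"
      using w0 psi_le1[of z] by (simp add: mult_left_le)
    also have "\<dots> \<le> l + l powr (1 - t) * q z"
      unfolding q_def by (rule young_pow[OF w0 l t])
    finally show ?thesis using True Pid[OF True] by (simp add: h_def)
  next
    case False
    then have "psi z = 0" using outside_ball[of z] by (simp add: Kb_def)
    then show ?thesis using l False by (simp add: h_def)
  qed
  have qc: "continuous_on Kb q"
    unfolding q_def[abs_def]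
    by (rule continuous_on_powr', rule continuous_on_compose2[OF wc], (intro continuous_intros)?)
       (use inO2 w0K t in auto)
  have qint: "(q has_integral integral Kb q) Kb"
    by (rule integrable_integral, rule integrable_compact_cont[OF Kprops(4) qc])
  have hint: "(h has_integral integral Kb q) Bx"
    unfolding h_def[abs_def] Bx_def Kb_def
    by (subst has_integral_restrict[OF cball_sub_cbox]) (use qint in \<open>simp add: Kb_def\<close>)
  have lhsint: "(\<lambda>z. w (x0 + R *\<^sub>R P z) * psi z) integrable_on Bx"
  proof -
    have "continuous_on Bx (\<lambda>z. w (x0 + R *\<^sub>R P z) * psi z)"
      by (intro continuous_intros psi_cont continuous_on_compose2[OF wc] Pc) (use inO in auto)
    then show ?thesis unfolding Bx_def by (rule integrable_continuous)
  qed
  have "integral Bx (\<lambda>z. w (x0 + R *\<^sub>R P z) * psi z) \<le> integral Bx (\<lambda>z. l + l powr (1 - t) * h z)"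
    by (rule integral_le[OF lhsint]) (use hint pt in \<open>auto intro!: integrable_add integrable_on_mult_right simp: Bx_def\<close>)
  also have "\<dots> = l * Henstock_Kurzweil_Integration.content Bx + l powr (1 - t) * integral Kb q"
  proof -
    have "((\<lambda>z. l + l powr (1 - t) * h z) has_integral
          (Henstock_Kurzweil_Integration.content Bx *\<^sub>R l + l powr (1 - t) * integral Kb q)) Bx"
      unfolding Bx_def by (intro has_integral_add has_integral_const has_integral_mult_right hint[unfolded Bx_def])
    then show ?thesis by (simp add: integral_unique mult.commute)
  qed
  finally have I1: "integral Bx (\<lambda>z. w (x0 + R *\<^sub>R P z) * psi z) \<le> l * Henstock_Kurzweil_Integration.content Bx + l powr (1 - t) * integral Kb q" .
  have "ennreal (integral Kb q * R ^ DIM('a)) \<le> (\<integral>\<^sup>+x\<in>\<Omega>. ennreal (w x powr t) \<partial>lebesgue)"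
    unfolding Kb_def q_def
  proof (rule scaled_bound[OF R(1) _ _ cbsub])
    show "continuous_on (cball x0 R) (\<lambda>x. w x powr t)"
      by (rule continuous_on_powr', rule continuous_on_subset[OF wc cbsub], intro continuous_intros)
         (use cbsub wnn t in auto)
  qed auto
  also have "\<dots> \<le> ennreal Y" by (rule Y(1))
  finally have "integral Kb q * R ^ DIM('a) \<le> Y" using Y(2) by (simp add: ennreal_le_iff)
  then have I2: "integral Kb q \<le> Y / R ^ DIM('a)" using R by (simp add: pos_le_divide_eq)
  have "l powr (1 - t) * integral Kb q \<le> l powr (1 - t) * (Y / R ^ DIM('a))"
    by (rule mult_left_mono[OF I2]) simp
  then show ?thesis using sm I1 unfolding Bx_def Kb_def P_def by simp
qed



lemma step1_arith:
  fixes Psi CB MI Ct t p L l \<eta> :: real and D :: nat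
  assumes Psi: "Psi > 0" and CB: "CB \<ge> 0" and MI: "MI \<ge> 0" and Ct: "Ct > 0" and t: "t \<ge> 1" and p: "p > 1"
    and D: "D \<ge> 1"
    and l: "l = Psi / (8 * (CB + 1))"
    and L: "L = max 1 (8 * l powr (1 - t) * Ct / Psi)"
    and \<eta>: "\<eta> = min 1 (Psi / (4 * (MI + 1) * L^2))"
  shows "l * CB + l powr (1 - t) * Ct / L ^ D + \<eta> powr p * MI * L^2 / 2 \<le> 3 * Psi / 8"
proof -
  have lpos: "l > 0" using Psi CB l by simp
  have L1: "L \<ge> 1" using L by simp
  have t1: "l * CB \<le> Psi / 8"
  proof -
    have "l * CB = Psi * CB / (8 * (CB + 1))" using l by simp
    also have "\<dots> \<le> Psi / 8" using Psi CB by (simp add: field_simps)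
    finally show ?thesis .
  qed
  have t2: "l powr (1 - t) * Ct / L ^ D \<le> Psi / 8"
  proof -
    have "L ^ 1 \<le> L ^ D" by (rule power_increasing[OF D L1])
    then have LD: "L \<le> L ^ D" by simp
    have A: "l powr (1 - t) * Ct \<ge> 0" using Ct by simp
    have "l powr (1 - t) * Ct / L ^ D \<le> l powr (1 - t) * Ct / L"
      using L1 LD A by (intro divide_left_mono) auto
    also have "\<dots> \<le> Psi / 8"
    proof -
      have "8 * l powr (1 - t) * Ct / Psi \<le> L" using L by simp
      then have "8 * l powr (1 - t) * Ct \<le> L * Psi" using Psi by (simp add: pos_divide_le_eq)
      then show ?thesis using L1 Psi by (simp add: pos_divide_le_eq field_simps)
    qed
    finally show ?thesis .
  qed
  have t3: "\<eta> powr p * MI * L^2 / 2 \<le> Psi / 8"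
  proof -
    have \<eta>pos: "\<eta> > 0" using \<eta> Psi MI L1 by simp
    have \<eta>1: "\<eta> \<le> 1" using \<eta> by simp
    have "\<eta> powr p \<le> \<eta> powr 1" by (rule powr_mono') (use p \<eta>pos \<eta>1 in auto)
    then have ep: "\<eta> powr p \<le> \<eta>" using \<eta>pos by simp
    have "\<eta> powr p * MI * L^2 / 2 \<le> \<eta> * MI * L^2 / 2"
      using ep MI by (intro divide_right_mono mult_right_mono) auto
    also have "\<dots> \<le> Psi / 8"
    proof -
      have "\<eta> \<le> Psi / (4 * (MI + 1) * L^2)" using \<eta> by simp
      then have "\<eta> * (4 * (MI + 1) * L^2) \<le> Psi" using MI L1 by (simp add: le_divide_eq)
      moreover have "\<eta> * MI * L^2 \<le> \<eta> * (MI + 1) * L^2" using \<eta>pos by (simp add: mult_right_mono)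
      ultimately show ?thesis by (simp add: algebra_simps)
    qed
    finally show ?thesis .
  qed
  show ?thesis using t1 t2 t3 by simp
qed



theorem lemma6p9:
  fixes \<Omega> \<Omega>' :: "'a::euclidean_space set"
    and v :: "nat \<Rightarrow> 'a \<Rightarrow> real"
    and \<mu> :: "nat \<Rightarrow> real"
    and p t C\<^sub>0 C\<^sub>t :: real
  assumes dim: "DIM('a) \<ge> 3"
    and p: "1 < p" "p < real DIM('a) / (real DIM('a) - 2)"
    and \<Omega>: "open \<Omega>" "bounded \<Omega>" "connected \<Omega>"
    and \<mu>: "filterlim \<mu> at_top sequentially"
    and v_nonneg: "\<And>n x. x \<in> \<Omega> \<Longrightarrow> v n x \<ge> 0"
    and v_eq: "\<And>n. solves_neg_laplace (v n) (\<lambda>x. \<mu> n * pos_part (v n x - 1) powr p) \<Omega>"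
    and t: "t \<ge> 1" and C: "C\<^sub>0 > 0" "C\<^sub>t > 0"
    and bound0: "\<And>n. ennreal (\<mu> n powr (real DIM('a) / 2)) *
                   (\<integral>\<^sup>+x\<in>\<Omega>. ennreal (pos_part (v n x - 1) powr p) \<partial>lebesgue) \<le> ennreal C\<^sub>0"
    and boundt: "\<And>n. ennreal (\<mu> n powr (real DIM('a) / 2)) *
                   (\<integral>\<^sup>+x\<in>\<Omega>. ennreal (v n x powr t) \<partial>lebesgue) \<le> ennreal C\<^sub>t"
    and \<Omega>': "open \<Omega>'" "connected \<Omega>'" "\<Omega>' \<subseteq> \<Omega>"
    and locunif: "\<And>K. compact K \<Longrightarrow> K \<subseteq> \<Omega>' \<Longrightarrow>
                   uniform_limit K (\<lambda>n x. pos_part (v n x - 1)) (\<lambda>x. 0) sequentially"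
  shows "\<forall>\<Omega>\<^sub>0. open \<Omega>\<^sub>0 \<and> compact (closure \<Omega>\<^sub>0) \<and> closure \<Omega>\<^sub>0 \<subseteq> \<Omega>' \<longrightarrow>
           (\<exists>n\<^sub>0::nat. \<exists>C>0. \<forall>n>n\<^sub>0.
              (\<forall>x\<in>\<Omega>\<^sub>0. pos_part (v n x - 1) = 0) \<and>
              (\<forall>x\<in>\<Omega>\<^sub>0. \<bar>v n x\<bar> \<le> C * (\<mu> n powr (-1/2)) powr (real DIM('a) / t)))"
proof (intro allI impI)
  fix \<Omega>0 :: "'a set"
  assume H: "open \<Omega>0 \<and> compact (closure \<Omega>0) \<and> closure \<Omega>0 \<subseteq> \<Omega>'"
  define K0 where "K0 = closure \<Omega>0"
  have K0c: "compact K0" and K0s: "K0 \<subseteq> \<Omega>'" using H by (auto simp: K0_def)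
  have OK0: "\<Omega>0 \<subseteq> K0" by (simp add: K0_def closure_subset)
  obtain e where e: "e > 0" "(\<Union>x\<in>K0. cball x e) \<subseteq> \<Omega>'"
    using compact_subset_open_imp_cball_epsilon_subset[OF K0c \<Omega>'(1) K0s] by blast
  define d where "d = e / 3"
  have d: "d > 0" using e by (simp add: d_def)
  define K1 where "K1 = {x + y | x y. x \<in> K0 \<and> y \<in> cball 0 (2 * d)}"
  have K1c: "compact K1" unfolding K1_def by (rule compact_sums[OF K0c compact_cball])
  have K1s: "K1 \<subseteq> \<Omega>'"
  proof
    fix z assume "z \<in> K1"
    then obtain x y where xy: "z = x + y" "x \<in> K0" "norm y \<le> 2 * d"
      unfolding K1_def by (auto simp: mem_cball_0)
    then have "z \<in> cball x e" using e by (simp add: dist_norm d_def)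
    then show "z \<in> \<Omega>'" using e xy by blast
  qed
  define Nd where "Nd = {x + y | x y. x \<in> K0 \<and> y \<in> cball 0 d}"
  have ballNd: "ball x r \<subseteq> K1" if x: "x \<in> Nd" and r: "r \<le> d" for x r
  proof
    fix z assume z: "z \<in> ball x r"
    from x obtain x' y where xy: "x = x' + y" "x' \<in> K0" "norm y \<le> d"
      unfolding Nd_def by (auto simp: mem_cball_0)
    have "norm (y + (z - x)) \<le> norm y + norm (z - x)" by (rule norm_triangle_ineq)
    also have "norm (z - x) < r" using z by (simp add: dist_norm norm_minus_commute)
    finally have "norm (y + (z - x)) \<le> 2 * d" using xy r by simp
    moreover have "z = x' + (y + (z - x))" using xy by simp
    ultimately show "z \<in> K1" unfolding K1_def using xy(2)
      by (intro CollectI exI[of _ x'] exI[of _ "y + (z - x)"]) (auto simp: mem_cball_0)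
  qed
  have ballK0: "ball x d \<subseteq> Nd" if x: "x \<in> K0" for x
  proof
    fix z assume z: "z \<in> ball x d"
    have "z = x + (z - x)" by simp
    moreover have "norm (z - x) \<le> d" using z by (simp add: dist_norm norm_minus_commute)
    ultimately show "z \<in> Nd" unfolding Nd_def using x
      by (intro CollectI exI[of _ x] exI[of _ "z - x"]) (auto simp: mem_cball_0)
  qed
  have K0Nd: "K0 \<subseteq> Nd"
  proof
    fix x assume "x \<in> K0"
    moreover have "x \<in> ball x d" using d by simp
    ultimately show "x \<in> Nd" using ballK0 by blast
  qed
  have K1O: "K1 \<subseteq> \<Omega>" using K1s \<Omega>'(3) by blast
  have NdO: "Nd \<subseteq> \<Omega>"
  proof
    fix x assume x: "x \<in> Nd"
    have "x \<in> ball x d" using d by simp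
    then show "x \<in> \<Omega>" using ballNd[OF x order_refl] K1O by blast
  qed

  define Psi where "Psi = integral (cbox (-One) (One::'a)) psi"
  define CB where "CB = Henstock_Kurzweil_Integration.content (cbox (-One) (One::'a))"
  define MI where "MI = integral (cball (0::'a) 1) Phi"
  have Psi: "Psi > 0" unfolding Psi_def by (rule Psi_pos)
  have CB: "CB \<ge> 0" unfolding CB_def by (rule content_pos_le)
  have MI: "MI \<ge> 0" unfolding MI_def
    by (rule integral_nonneg[OF integrable_compact_cont[OF compact_cball Phi_cont] Phi_nonneg])
  define D where "D = DIM('a)"
  have D1: "D \<ge> 1" using dim by (simp add: D_def)
  define \<epsilon> where "\<epsilon> n = \<mu> n powr (-1/2)" for n

  have eps_pos: "\<epsilon> n > 0" if "\<mu> n > 0" for n using that by (simp add: \<epsilon>_def)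
  have mu_eps: "\<mu> n * (\<epsilon> n)^2 = 1" if "\<mu> n > 0" for n
  proof -
    have "(\<epsilon> n)^2 = \<epsilon> n powr 2" using eps_pos[OF that] powr_realpow[of "\<epsilon> n" 2] by simp
    also have "\<dots> = \<mu> n powr (-1)" unfolding \<epsilon>_def powr_powr by simp
    also have "\<dots> = 1 / \<mu> n" using that by (simp add: powr_minus_divide)
    finally show ?thesis using that by simp
  qed
  have Ybound: "(\<integral>\<^sup>+x\<in>\<Omega>. ennreal (v n x powr t) \<partial>lebesgue) \<le> ennreal (C\<^sub>t * \<epsilon> n ^ D)"
    if mu: "\<mu> n > 0" for n
  proof -
    define m where "m = \<mu> n powr (real DIM('a) / 2)"
    have m: "m > 0" using mu by (simp add: m_def)
    define X where "X = (\<integral>\<^sup>+x\<in>\<Omega>. ennreal (v n x powr t) \<partial>lebesgue)"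
    have bt: "ennreal m * X \<le> ennreal C\<^sub>t" using boundt[of n] unfolding m_def X_def .
    have one: "ennreal (1 / m) * ennreal m = 1" using m by (simp add: ennreal_mult[symmetric])
    have "X = ennreal (1 / m) * (ennreal m * X)"
      by (simp add: mult.assoc[symmetric] one)
    also have "\<dots> \<le> ennreal (1 / m) * ennreal C\<^sub>t"
      by (rule mult_left_mono[OF bt]) simp
    also have "\<dots> = ennreal (C\<^sub>t / m)" using m C by (simp add: ennreal_mult[symmetric])
    also have "C\<^sub>t / m = C\<^sub>t * \<epsilon> n ^ D"
    proof -
      have "\<epsilon> n ^ D = \<epsilon> n powr (real D)" using eps_pos[OF mu] by (simp add: powr_realpow)
      also have "\<dots> = \<mu> n powr (-1/2 * real D)" unfolding \<epsilon>_def by (rule powr_powr)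
      also have "-1/2 * real D = - (real DIM('a) / 2)" by (simp add: D_def)
      also have "\<mu> n powr (- (real DIM('a) / 2)) = 1 / m" by (simp add: m_def powr_minus_divide)
      finally show ?thesis by simp
    qed
    finally show ?thesis unfolding X_def .
  qed
  define l1 where "l1 = Psi / (8 * (CB + 1))"
  define L where "L = max 1 (8 * l1 powr (1 - t) * C\<^sub>t / Psi)"
  define \<eta> where "\<eta> = min 1 (Psi / (4 * (MI + 1) * L^2))"
  have L1: "L \<ge> 1" by (simp add: L_def)
  have \<eta>pos: "\<eta> > 0" using Psi MI L1 by (simp add: \<eta>_def)
  have l1pos: "l1 > 0" using Psi CB by (simp add: l1_def)
  have arith1: "l1 * CB + l1 powr (1 - t) * C\<^sub>t / L ^ D + \<eta> powr p * MI * L^2 / 2 \<le> 3 * Psi / 8"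
    by (rule step1_arith[OF Psi CB MI C(2) t p(1) D1 l1_def L_def \<eta>_def])
  define Z where "Z = max 1 ((2 * L / d)^2)"
  have ev1: "\<forall>\<^sub>F n in sequentially. Z \<le> \<mu> n" using \<mu> by (simp add: filterlim_at_top)
  have ev2: "\<forall>\<^sub>F n in sequentially. \<forall>x\<in>K1. dist (pos_part (v n x - 1)) 0 < \<eta>"
    using uniform_limitD[OF locunif[OF K1c K1s] \<eta>pos] by simp
  obtain n1 where n1: "\<And>n. n \<ge> n1 \<Longrightarrow> Z \<le> \<mu> n \<and> (\<forall>x\<in>K1. dist (pos_part (v n x - 1)) 0 < \<eta>)"
    using eventually_conj[OF ev1 ev2] unfolding eventually_sequentially by blast
  have S1: "v n x \<le> 3/8" if n: "n \<ge> n1" and x: "x \<in> Nd" for n x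
  proof -
    have mu1: "\<mu> n \<ge> 1" and muZ: "\<mu> n \<ge> (2 * L / d)^2" using n1[OF n] by (auto simp: Z_def)
    have mu: "\<mu> n > 0" using mu1 by simp
    have ep: "\<epsilon> n > 0" using eps_pos[OF mu] .
    define R where "R = L * \<epsilon> n"
    have R: "R > 0" using L1 ep by (simp add: R_def)
    have "(\<epsilon> n)^2 = 1 / \<mu> n" using mu_eps[OF mu] mu by (simp add: field_simps)
    also have "\<dots> \<le> 1 / (2 * L / d)^2"
    proof -
      have pos: "(2 * L / d)^2 > 0" using L1 d by simp
      show ?thesis by (rule divide_left_mono[OF muZ]) (simp, rule mult_pos_pos[OF mu pos])
    qed
    also have "\<dots> = (d / (2 * L))^2" by (simp add: power_divide)
    finally have "\<epsilon> n \<le> d / (2 * L)" by (rule power2_le_imp_le) (use d L1 in simp)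
    then have R2d: "2 * R \<le> d" using L1 by (simp add: R_def field_simps)
    have bK1: "ball x (2 * R) \<subseteq> K1" by (rule ballNd[OF x R2d])
    have "v n x * Psi \<le> l1 * CB + l1 powr (1 - t) * (C\<^sub>t * \<epsilon> n ^ D) / R ^ DIM('a)
             + (\<mu> n * \<eta> powr p) * MI * R^2 / 2"
      unfolding Psi_def CB_def MI_def
    proof (rule combined[OF v_eq[of n] R])
      show "R < 2 * R" using R by simp
      show "ball x (2 * R) \<subseteq> \<Omega>" using bK1 K1O by blast
      show "\<mu> n * pos_part (v n y - 1) powr p \<le> \<mu> n * \<eta> powr p" if "y \<in> ball x (2 * R)" for y
      proof -
        have "y \<in> K1" using that bK1 by blast
        then have "pos_part (v n y - 1) < \<eta>" using n1[OF n] by force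
        moreover have "pos_part (v n y - 1) \<ge> 0" by (simp add: pos_part_def)
        ultimately have "pos_part (v n y - 1) powr p \<le> \<eta> powr p"
          using p by (intro powr_mono2) auto
        then show ?thesis using mu by (simp add: mult_left_mono)
      qed
      show "0 \<le> \<mu> n * \<eta> powr p" using mu by simp
      show "(\<integral>\<^sup>+x\<in>\<Omega>. ennreal (v n x powr t) \<partial>lebesgue) \<le> ennreal (C\<^sub>t * \<epsilon> n ^ D)" by (rule Ybound[OF mu])
      show "0 \<le> C\<^sub>t * \<epsilon> n ^ D" using C ep by simp
    qed (use v_nonneg l1pos t in auto)
    also have "l1 powr (1 - t) * (C\<^sub>t * \<epsilon> n ^ D) / R ^ DIM('a) = l1 powr (1 - t) * C\<^sub>t / L ^ D"
      using ep L1 by (simp add: R_def D_def power_mult_distrib)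
    also have "(\<mu> n * \<eta> powr p) * MI * R^2 / 2 = \<eta> powr p * MI * L^2 / 2"
    proof -
      have "(\<mu> n * \<eta> powr p) * MI * R^2 / 2 = (\<mu> n * (\<epsilon> n)^2) * \<eta> powr p * MI * L^2 / 2"
        by (simp add: R_def power_mult_distrib)
      then show ?thesis using mu_eps[OF mu] by simp
    qed
    finally have "v n x * Psi \<le> 3 * Psi / 8" using arith1 by linarith
    then show ?thesis using Psi by (simp add: field_simps)
  qed
  define C2 where "C2 = (CB + C\<^sub>t / (d / 2) ^ D) / Psi + 1"
  have "(CB + C\<^sub>t / (d / 2) ^ D) / Psi \<ge> 0" using CB C Psi d by (intro divide_nonneg_pos add_nonneg_nonneg) auto
  then have C2pos: "C2 > 0" by (simp add: C2_def)
  show "\<exists>n\<^sub>0::nat. \<exists>C>0. \<forall>n>n\<^sub>0.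
              (\<forall>x\<in>\<Omega>0. pos_part (v n x - 1) = 0) \<and>
              (\<forall>x\<in>\<Omega>0. \<bar>v n x\<bar> \<le> C * (\<mu> n powr (-1/2)) powr (real DIM('a) / t))"
  proof (intro exI[of _ n1] exI[of _ C2] conjI C2pos allI impI ballI)
    fix n x assume n: "n > n1" and x: "x \<in> \<Omega>0"
    have n': "n \<ge> n1" using n by simp
    have pp0: "pos_part (v n y - 1) = 0" if "y \<in> Nd" for y
      using S1[OF n' that] by (simp add: pos_part_def)
    show "pos_part (v n x - 1) = 0" using pp0 x OK0 K0Nd by blast
    have mu: "\<mu> n > 0" using n1[OF n'] by (simp add: Z_def)
    have ep: "\<epsilon> n > 0" using eps_pos[OF mu] .
    define E where "E = \<epsilon> n powr (real DIM('a) / t)"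
    have E: "E > 0" using ep by (simp add: E_def)
    have xK0: "x \<in> K0" using x OK0 by blast
    have d2: "0 < d / 2" "d / 2 < d" using d by auto
    have "v n x * Psi \<le> E * CB + E powr (1 - t) * (C\<^sub>t * \<epsilon> n ^ D) / (d / 2) ^ DIM('a)
             + 0 * MI * (d / 2)^2 / 2"
      unfolding Psi_def CB_def MI_def
    proof (rule combined[OF v_eq[of n] d2])
      show "ball x d \<subseteq> \<Omega>" using ballK0[OF xK0] NdO by blast
      show "\<mu> n * pos_part (v n y - 1) powr p \<le> 0" if "y \<in> ball x d" for y
        using pp0 ballK0[OF xK0] that by auto
      show "(\<integral>\<^sup>+x\<in>\<Omega>. ennreal (v n x powr t) \<partial>lebesgue) \<le> ennreal (C\<^sub>t * \<epsilon> n ^ D)" by (rule Ybound[OF mu])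
      show "0 \<le> C\<^sub>t * \<epsilon> n ^ D" using C ep by simp
    qed (use v_nonneg E t in auto)
    also have "E powr (1 - t) * (C\<^sub>t * \<epsilon> n ^ D) / (d / 2) ^ DIM('a) = E * (C\<^sub>t / (d / 2) ^ D)"
    proof -
      have tpos: "t > 0" using t by simp
      have "E powr (1 - t) * \<epsilon> n ^ D = \<epsilon> n powr (real DIM('a) / t * (1 - t)) * \<epsilon> n powr (real DIM('a))"
        using ep by (simp add: E_def powr_powr powr_realpow D_def)
      also have "\<dots> = \<epsilon> n powr (real DIM('a) / t * (1 - t) + real DIM('a))" by (simp add: powr_add)
      also have "real DIM('a) / t * (1 - t) + real DIM('a) = real DIM('a) / t"
        using tpos by (simp add: field_simps)
      finally have "E powr (1 - t) * \<epsilon> n ^ D = E" by (simp add: E_def)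
      then show ?thesis by (simp add: D_def algebra_simps)
    qed
    finally have "v n x * Psi \<le> E * (CB + C\<^sub>t / (d / 2) ^ D)" by (simp add: algebra_simps)
    then have "v n x \<le> E * ((CB + C\<^sub>t / (d / 2) ^ D) / Psi)" using Psi by (simp add: field_simps)
    also have "\<dots> \<le> E * C2" using E by (intro mult_left_mono) (auto simp: C2_def)
    finally have "v n x \<le> C2 * E" by (simp add: mult.commute)
    moreover have "v n x \<ge> 0" using v_nonneg x OK0 K0s \<Omega>'(3) by blast
    ultimately show "\<bar>v n x\<bar> \<le> C2 * (\<mu> n powr (-1/2)) powr (real DIM('a) / t)"
      by (simp add: E_def \<epsilon>_def)
  qed
qed

end
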